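(* Let $X$ be a compact space and let $Y$ be a zero-dimensional closed subspace of $X$. If $F$ is a closed subset of $C(X,[0,1])$ such that $f(Y)$ is infinite for every $f\in F$, then $F$ is a $Z$-set in $C(X,[0,1])$.
   Context: Compact spaces are Hausdorff. $C(X,[0,1])$ is the space of continuous maps $X\to[0,1]$ with the sup-metric topology. For topological spaces $K,T$, $C(K,T)$ denotes the space of continuous maps $K\to T$ with the compact-open topology. A closed subset $F$ of a topological space $T$ is a $Z$-set in $T$ if for every compact (Hausdorff) space $K$ the set $C(K,T\setminus F)$ is dense in $C(K,T)$. *)

theory Defs
  imports "HOL-Analysis.Analysis"
begin

text \<open>The space C(X,[0,1]) of continuous maps X -> [0,1] with the sup-metric topology.
  Functions are extensional (undefined outside the topspace of X).\<close>
definition unit_cfun_topology :: "'a topology \<Rightarrow> ('a \<Rightarrow> real) topology" where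
  "unit_cfun_topology X = mtopology_of (cfunspace X (submetric euclidean_metric {0..1}))"

definition cmaps :: "'k topology \<Rightarrow> 'b topology \<Rightarrow> ('k \<Rightarrow> 'b) set" where
  "cmaps K T = {g. continuous_map K T g \<and> g \<in> extensional (topspace K)}"

definition compact_open_topology :: "'k topology \<Rightarrow> 'b topology \<Rightarrow> ('k \<Rightarrow> 'b) topology" where
  "compact_open_topology K T =
     topology_generated_by
       {{g \<in> cmaps K T. g ` C \<subseteq> U} | C U. compactin K C \<and> openin T U}"

definition Z_set :: "'k itself \<Rightarrow> 'b topology \<Rightarrow> 'b set \<Rightarrow> bool" where
  "Z_set (_ :: 'k itself) T F \<longleftrightarrow>
     closedin T F \<and>
     (\<forall>K :: 'k topology. compact_space K \<and> Hausdorff_space K \<longrightarrow>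
        (compact_open_topology K T) closure_of (cmaps K (subtopology T (topspace T - F)))
          = topspace (compact_open_topology K T))"

end

theory Submission
  imports Defs
begin

lemma topspace_co: "topspace (compact_open_topology K T) = cmaps K T"
proof -
  have "cmaps K T \<in> {{g \<in> cmaps K T. g ` C \<subseteq> U} | C U. compactin K C \<and> openin T U}"
    by (rule CollectI, rule exI[of _ "{}"], rule exI[of _ "topspace T"]) auto
  then show ?thesis unfolding compact_open_topology_def topology_generated_by_topspace by auto
qed

lemma gen_approx:
  fixes M :: "'b metric" and K :: "'k topology"
  assumes "generate_topology_on B U"
    and B_def: "B = {{g \<in> cmaps K (mtopology_of M). g ` C \<subseteq> V} | C V. compactin K C \<and> openin (mtopology_of M) V}"
  shows "g \<in> U \<Longrightarrow> g \<in> cmaps K (mtopology_of M) \<Longrightarrow> \<exists>\<epsilon>>0. \<forall>h\<in>cmaps K (mtopology_of M). (\<forall>k\<in>topspace K. mdist M (h k) (g k) < \<epsilon>) \<longrightarrow> h \<in> U"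
  using assms(1)
proof (induction arbitrary: g rule: generate_topology_on.induct)
  case Empty
  then show ?case by simp
next
  case (Int a b)
  have ga: "g \<in> a" and gb: "g \<in> b" using Int.prems(1) by blast+
  obtain e1 where e1: "e1 > 0" "\<forall>h\<in>cmaps K (mtopology_of M). (\<forall>k\<in>topspace K. mdist M (h k) (g k) < e1) \<longrightarrow> h \<in> a"
    using Int.IH(1)[OF ga Int.prems(2)] by blast
  obtain e2 where e2: "e2 > 0" "\<forall>h\<in>cmaps K (mtopology_of M). (\<forall>k\<in>topspace K. mdist M (h k) (g k) < e2) \<longrightarrow> h \<in> b"
    using Int.IH(2)[OF gb Int.prems(2)] by blast
  show ?case
  proof (intro exI[of _ "min e1 e2"] conjI ballI impI)
    show "min e1 e2 > 0" using e1 e2 by simp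
    fix h assume h: "h \<in> cmaps K (mtopology_of M)" and hd: "\<forall>k\<in>topspace K. mdist M (h k) (g k) < min e1 e2"
    then have "h \<in> a" using e1(2) by simp
    moreover have "h \<in> b" using h hd e2(2) by simp
    ultimately show "h \<in> a \<inter> b" by blast
  qed
next
  case (UN Ks)
  then obtain k where "k \<in> Ks" "g \<in> k" by auto
  with UN show ?case by blast
next
  case (Basis s)
  interpret Metric_space "mspace M" "mdist M" by (simp add: Metric_space_mspace_mdist)
  obtain C V where s: "s = {g \<in> cmaps K (mtopology_of M). g ` C \<subseteq> V}" and C: "compactin K C"
    and V: "openin mtopology V"
    using Basis.hyps B_def by (auto simp: mtopology_of_def)
  have gc: "continuous_map K mtopology g" using Basis.prems by (simp add: cmaps_def mtopology_of_def)
  have gCV: "g ` C \<subseteq> V" using Basis.prems s by auto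
  have "\<forall>c\<in>C. \<exists>r>0. mball (g c) r \<subseteq> V"
    using V gCV by (auto simp: openin_mtopology)
  then obtain r where r: "\<And>c. c \<in> C \<Longrightarrow> r c > 0 \<and> mball (g c) (r c) \<subseteq> V" by metis
  define W where "W c = {k \<in> topspace K. g k \<in> mball (g c) (r c / 2)}" for c
  have Wo: "openin K (W c)" for c
    unfolding W_def by (rule openin_continuous_map_preimage[OF gc]) simp
  have "C \<subseteq> \<Union> (W ` C)"
  proof
    fix c assume "c \<in> C"
    then have "c \<in> topspace K" using C compactin_subset_topspace by blast
    then have "g c \<in> mspace M" using gc by (auto simp: continuous_map_def)
    then show "c \<in> \<Union> (W ` C)" using \<open>c \<in> C\<close> r[OF \<open>c \<in> C\<close>] \<open>c \<in> topspace K\<close>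
      by (auto simp: W_def intro!: bexI[of _ c])
  qed
  moreover have "\<forall>B\<in>W ` C. openin K B" using Wo by blast
  ultimately have "\<exists>F. finite F \<and> F \<subseteq> W ` C \<and> C \<subseteq> \<Union>F" using C unfolding compactin_def by blast
  then obtain Fs where "finite Fs" "Fs \<subseteq> W ` C" "C \<subseteq> \<Union> Fs" by blast
  then obtain C' where C': "finite C'" "C' \<subseteq> C" "C \<subseteq> \<Union> (W ` C')"
    by (metis finite_subset_image)
  define e where "e = Min (insert 1 ((\<lambda>c. r c / 2) ` C'))"
  have epos: "e > 0" unfolding e_def using C' r by (subst Min_gr_iff) auto
  have ele: "e \<le> r c / 2" if "c \<in> C'" for c unfolding e_def using C' that by (intro Min_le) auto
  show ?case
  proof (intro exI[of _ e] conjI epos ballI impI)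
    fix h assume h: "h \<in> cmaps K (mtopology_of M)" and hd: "\<forall>k\<in>topspace K. mdist M (h k) (g k) < e"
    have "h ` C \<subseteq> V"
    proof
      fix z assume "z \<in> h ` C"
      then obtain c0 where c0: "c0 \<in> C" "z = h c0" by auto
      then have c0K: "c0 \<in> topspace K" using C compactin_subset_topspace by blast
      obtain c where c: "c \<in> C'" "c0 \<in> W c" using C' c0 by auto
      have "h c0 \<in> mspace M" using h c0K by (auto simp: cmaps_def mtopology_of_def continuous_map_def)
      have "g c0 \<in> mspace M" "g c \<in> mspace M" "mdist M (g c) (g c0) < r c / 2" using c by (auto simp: W_def)
      moreover have "mdist M (h c0) (g c0) < r c / 2" using hd c0K ele[OF c(1)] by fastforce
      ultimately have "mdist M (g c) (h c0) < r c"
        using triangle[of "g c" "g c0" "h c0"] commute \<open>h c0 \<in> mspace M\<close> by fastforce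
      then have "h c0 \<in> mball (g c) (r c)" using \<open>h c0 \<in> mspace M\<close> \<open>g c \<in> mspace M\<close> by auto
      then show "z \<in> V" using r c C' c0 by blast
    qed
    then show "h \<in> s" using s h by auto
  qed
qed

lemma dense_crit:
  fixes M :: "'b metric" and K :: "'k topology"
  assumes approx: "\<And>g \<epsilon>. g \<in> cmaps K (mtopology_of M) \<Longrightarrow> \<epsilon> > 0 \<Longrightarrow> \<exists>h\<in>S. \<forall>k\<in>topspace K. mdist M (h k) (g k) < \<epsilon>"
    and sub: "S \<subseteq> cmaps K (mtopology_of M)"
  shows "compact_open_topology K (mtopology_of M) closure_of S = topspace (compact_open_topology K (mtopology_of M))"
proof -
  have "g \<in> compact_open_topology K (mtopology_of M) closure_of S" if g: "g \<in> cmaps K (mtopology_of M)" for g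
  proof (subst in_closure_of, intro conjI allI impI)
    show "g \<in> topspace (compact_open_topology K (mtopology_of M))" using g by (simp add: topspace_co)
    fix U assume "g \<in> U \<and> openin (compact_open_topology K (mtopology_of M)) U"
    then have gen: "generate_topology_on {{g \<in> cmaps K (mtopology_of M). g ` C \<subseteq> V} | C V. compactin K C \<and> openin (mtopology_of M) V} U" and gU: "g \<in> U"
      by (auto simp: compact_open_topology_def openin_topology_generated_by_iff)
    obtain e where "e > 0" "\<forall>h\<in>cmaps K (mtopology_of M). (\<forall>k\<in>topspace K. mdist M (h k) (g k) < e) \<longrightarrow> h \<in> U"
      using gen_approx[OF gen refl gU g] by blast
    moreover obtain h where "h \<in> S" "\<forall>k\<in>topspace K. mdist M (h k) (g k) < e" using approx g \<open>e > 0\<close> by blast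
    ultimately show "\<exists>y. y \<in> S \<and> y \<in> U" using sub by blast
  qed
  then have "cmaps K (mtopology_of M) \<subseteq> compact_open_topology K (mtopology_of M) closure_of S" by blast
  moreover have "compact_open_topology K (mtopology_of M) closure_of S \<subseteq> cmaps K (mtopology_of M)"
    using closure_of_subset_topspace[of "compact_open_topology K (mtopology_of M)" S] by (simp only: topspace_co)
  ultimately show ?thesis by (simp only: topspace_co)
qed

lemma conv_bound:
  fixes t a b lo hi :: real
  assumes "0 \<le> t" "t \<le> 1" "lo \<le> a" "a \<le> hi" "lo \<le> b" "b \<le> hi"
  shows "lo \<le> (1 - t) * a + t * b \<and> (1 - t) * a + t * b \<le> hi"
proof -
  have "(1 - t) * (a - lo) \<ge> 0" "t * (b - lo) \<ge> 0" "(1 - t) * (hi - a) \<ge> 0" "t * (hi - b) \<ge> 0"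
    using assms by auto
  then show ?thesis by (auto simp: algebra_simps)
qed

primrec hfold :: "('k \<Rightarrow> 'a \<Rightarrow> real) \<Rightarrow> ('a \<Rightarrow> 'a \<Rightarrow> real) \<Rightarrow> 'a list \<Rightarrow> 'k \<Rightarrow> 'a \<Rightarrow> real" where
  "hfold G \<Phi> [] k x = G k x"
| "hfold G \<Phi> (y # ys) k x = (1 - \<Phi> y x) * hfold G \<Phi> ys k x + \<Phi> y x * G k y"

lemma hfold_cont:
  assumes "continuous_map X euclideanreal (G k)" "\<forall>y\<in>set ys. continuous_map X euclideanreal (\<Phi> y)"
  shows "continuous_map X euclideanreal (hfold G \<Phi> ys k)"
  using assms(2)
proof (induction ys)
  case Nil
  have "hfold G \<Phi> [] k = G k" by (rule ext) simp
  then show ?case using assms(1) by simp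
next
  case (Cons y ys)
  then show ?case by (auto intro!: continuous_intros)
qed

lemma hfold_range:
  assumes "G k x \<in> {0..1}" "\<forall>y\<in>set ys. \<Phi> y x \<in> {0..1} \<and> G k y \<in> {0..1}"
  shows "hfold G \<Phi> ys k x \<in> {0..1}"
  using assms(2)
proof (induction ys)
  case Nil
  then show ?case using assms(1) by simp
next
  case (Cons y ys)
  then show ?case using conv_bound[of "\<Phi> y x" 0 "hfold G \<Phi> ys k x" 1 "G k y"] by auto
qed

lemma hfold_close:
  assumes "e \<ge> 0" "\<forall>y\<in>set ys. \<Phi> y x \<in> {0..1} \<and> (\<Phi> y x \<noteq> 0 \<longrightarrow> \<bar>G k y - G k x\<bar> \<le> e)"
  shows "\<bar>hfold G \<Phi> ys k x - G k x\<bar> \<le> e"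
  using assms(2)
proof (induction ys)
  case Nil
  then show ?case using assms(1) by simp
next
  case (Cons y ys)
  show ?case
  proof (cases "\<Phi> y x = 0")
    case True
    then show ?thesis using Cons by simp
  next
    case False
    then show ?thesis using Cons conv_bound[of "\<Phi> y x" "G k x - e" "hfold G \<Phi> ys k x" "G k x + e" "G k y"]
      by (simp add: abs_le_iff)
  qed
qed

lemma hfold_lip:
  assumes "D \<ge> 0" "\<forall>y\<in>set ys. \<Phi> y x \<in> {0..1} \<and> \<bar>G k y - G k' y\<bar> \<le> D" "\<bar>G k x - G k' x\<bar> \<le> D"
  shows "\<bar>hfold G \<Phi> ys k x - hfold G \<Phi> ys k' x\<bar> \<le> D"
  using assms(2)
proof (induction ys)
  case Nil
  then show ?case using assms(3) by simp
next
  case (Cons y ys)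
  have eq: "hfold G \<Phi> (y # ys) k x - hfold G \<Phi> (y # ys) k' x
      = (1 - \<Phi> y x) * (hfold G \<Phi> ys k x - hfold G \<Phi> ys k' x) + \<Phi> y x * (G k y - G k' y)"
    by (simp add: algebra_simps)
  show ?case unfolding eq
    using Cons conv_bound[of "\<Phi> y x" "-D" "hfold G \<Phi> ys k x - hfold G \<Phi> ys k' x" D "G k y - G k' y"]
    by (simp add: abs_le_iff)
qed

lemma hfold_fin:
  assumes "\<forall>y\<in>set ys. \<Phi> y z = 0 \<or> \<Phi> y z = 1"
  shows "(hfold G \<Phi> ys k z = G k z \<and> (\<forall>y\<in>set ys. \<Phi> y z = 0)) \<or> hfold G \<Phi> ys k z \<in> (\<lambda>y. G k y) ` set ys"
  using assms
proof (induction ys)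
  case Nil
  then show ?case by simp
next
  case (Cons y ys)
  then show ?case by auto
qed

lemma main_approx:
  fixes X :: "'a topology" and K :: "'k topology" and F :: "('a \<Rightarrow> real) set"
  defines "CF \<equiv> cfunspace X (submetric euclidean_metric {0..1::real})"
  assumes cX: "compact_space X" and HX: "Hausdorff_space X"
    and cY: "closedin X Y" and dY: "subtopology X Y dim_le 0"
    and inf: "\<forall>f \<in> F. infinite (f ` Y)" and cK: "compact_space K"
    and g: "g \<in> cmaps K (mtopology_of CF)" and "\<epsilon> > 0"
  shows "\<exists>h\<in>cmaps K (subtopology (mtopology_of CF) (mspace CF - F)). \<forall>k\<in>topspace K. mdist CF (h k) (g k) < \<epsilon>"
proof -
  interpret CM: Metric_space "mspace CF" "mdist CF" by (simp add: Metric_space_mspace_mdist)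
  have mtm: "mtopology_of (submetric euclidean_metric {0..1::real}) = top_of_set {0..1}"
    by (simp add: mtopology_of_submetric)
  have msp: "mspace CF = {f. (\<forall>x\<in>topspace X. f x \<in> {0..1}) \<and> f \<in> extensional (topspace X) \<and> continuous_map X (top_of_set {0..1}) f}"
    unfolding CF_def using cX unfolding compact_space_def
    by (subst compactin_mspace_cfunspace) (auto simp: mtm)
  have mdCF: "\<bar>f x - f' x\<bar> \<le> mdist CF f f'" if "f \<in> mspace CF" "f' \<in> mspace CF" "x \<in> topspace X" for f f' x
    using mdist_cfunspace_imp_mdist_le[where m="submetric euclidean_metric {0..1::real}" and f=f and g=f' and X=X and a="mdist CF f f'" and x=x] that
    unfolding CF_def by (simp add: dist_real_def)
  have mdle: "mdist CF f f' \<le> B" if "0 \<le> B" "\<forall>x\<in>topspace X. \<bar>f x - f' x\<bar> \<le> B" for f f' B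
    unfolding CF_def using that by (intro mdist_cfunspace_le) (auto simp: dist_real_def)
  have gcont: "continuous_map K (mtopology_of CF) g" and gext: "g \<in> extensional (topspace K)"
    using g by (auto simp: cmaps_def)
  have gK: "g k \<in> mspace CF" if "k \<in> topspace K" for k
    using gcont that by (auto simp: continuous_map_def)
  have G1: "g k x \<in> {0..1}" if "k \<in> topspace K" "x \<in> topspace X" for k x
    using gK[OF that(1)] that(2) msp by auto
  have G2: "continuous_map X euclideanreal (g k)" if "k \<in> topspace K" for k
    using gK[OF that] msp by (auto simp: continuous_map_in_subtopology)
  have G3: "\<exists>W. openin K W \<and> k0 \<in> W \<and> (\<forall>k\<in>W. k \<in> topspace K \<and> (\<forall>x\<in>topspace X. \<bar>g k x - g k0 x\<bar> < \<delta>))"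
    if k0: "k0 \<in> topspace K" and "\<delta> > 0" for k0 \<delta>
  proof -
    have "continuous_map K CM.mtopology g" using gcont by (simp add: mtopology_of_def)
    then obtain U where U: "openin K U" "k0 \<in> U" "\<forall>k\<in>U. g k \<in> CM.mball (g k0) (\<delta>/2)"
      using k0 \<open>\<delta> > 0\<close> unfolding CM.continuous_map_to_metric by (meson half_gt_zero)
    show ?thesis
    proof (intro exI[of _ U] conjI ballI U(1,2))
      fix k assume k: "k \<in> U"
      then show kK: "k \<in> topspace K" using U(1) openin_subset by blast
      fix x assume x: "x \<in> topspace X"
      have "\<bar>g k x - g k0 x\<bar> \<le> mdist CF (g k) (g k0)" using mdCF gK kK k0 x by blast
      also have "\<dots> < \<delta>" using U(3) k CM.commute gK kK k0 \<open>\<delta> > 0\<close> by auto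
      finally show "\<bar>g k x - g k0 x\<bar> < \<delta>" .
    qed
  qed
  define e where "e = \<epsilon> / 4"
  have epos: "e > 0" using \<open>\<epsilon> > 0\<close> by (simp add: e_def)
  have step1: "\<exists>N. openin X N \<and> y \<in> N \<and> (\<forall>x\<in>N. \<forall>k\<in>topspace K. \<bar>g k x - g k y\<bar> < e)"
    if y: "y \<in> topspace X" for y
  proof -
    have e3: "e/3 > 0" using epos by simp
    have "\<forall>k0\<in>topspace K. \<exists>W. openin K W \<and> k0 \<in> W \<and>
        (\<forall>k\<in>W. k \<in> topspace K \<and> (\<forall>x\<in>topspace X. \<bar>g k x - g k0 x\<bar> < e/3))"
      using G3[OF _ e3] by blast
    then obtain W where W: "\<And>k0. k0 \<in> topspace K \<Longrightarrow> openin K (W k0) \<and> k0 \<in> W k0 \<and>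
        (\<forall>k\<in>W k0. k \<in> topspace K \<and> (\<forall>x\<in>topspace X. \<bar>g k x - g k0 x\<bar> < e/3))"
      by metis
    have "topspace K \<subseteq> \<Union> (W ` topspace K)" using W by blast
    moreover have "\<forall>B\<in>W ` topspace K. openin K B" using W by blast
    moreover have "\<forall>U. (\<forall>B\<in>U. openin K B) \<and> topspace K \<subseteq> \<Union>U \<longrightarrow> (\<exists>F. finite F \<and> F \<subseteq> U \<and> topspace K \<subseteq> \<Union>F)"
      using cK by (simp add: compact_space_def compactin_def)
    ultimately have "\<exists>F. finite F \<and> F \<subseteq> W ` topspace K \<and> topspace K \<subseteq> \<Union>F" by blast
    then obtain Fs where "finite Fs" "Fs \<subseteq> W ` topspace K" "topspace K \<subseteq> \<Union> Fs" by blast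
    then obtain K' where K': "finite K'" "K' \<subseteq> topspace K" "topspace K \<subseteq> \<Union> (W ` K')"
      by (metis finite_subset_image)
    define N where "N = topspace X \<inter> \<Inter> ((\<lambda>k'. {x\<in>topspace X. g k' x \<in> ball (g k' y) (e/3)}) ` K')"
    have "openin X N" unfolding N_def
    proof (intro openin_Int_Inter)
      show "finite ((\<lambda>k'. {x\<in>topspace X. g k' x \<in> ball (g k' y) (e/3)}) ` K')" using K' by simp
      show "openin X (topspace X)" by simp
      fix S assume "S \<in> (\<lambda>k'. {x\<in>topspace X. g k' x \<in> ball (g k' y) (e/3)}) ` K'"
      then obtain k' where "k' \<in> K'" "S = {x\<in>topspace X. g k' x \<in> ball (g k' y) (e/3)}" by blast
      then show "openin X S" using K' G2 openin_continuous_map_preimage[of X euclideanreal "g k'" "ball (g k' y) (e/3)"] by auto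
    qed
    moreover have "y \<in> N" using y epos by (auto simp: N_def)
    moreover have "\<bar>g k x - g k y\<bar> < e" if x: "x \<in> N" and k: "k \<in> topspace K" for x k
    proof -
      obtain k' where k': "k' \<in> K'" "k \<in> W k'" using K' k by auto
      have k'K: "k' \<in> topspace K" using K' k' by auto
      have xX: "x \<in> topspace X" using x by (auto simp: N_def)
      have "\<bar>g k x - g k' x\<bar> < e/3" "\<bar>g k y - g k' y\<bar> < e/3" using W[OF k'K] k' xX y by auto
      moreover have "\<bar>g k' y - g k' x\<bar> < e/3" using x k' by (auto simp: N_def dist_real_def)
      ultimately show ?thesis by linarith
    qed
    ultimately show ?thesis by blast
  qed
  have YX: "Y \<subseteq> topspace X" using cY closedin_subset by blast
  have normX: "normal_space X" using cX HX compact_Hausdorff_or_regular_imp_normal_space by blast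
  have step2: "\<exists>Q \<phi>. openin X Q \<and> y \<in> Q \<and> continuous_map X euclideanreal \<phi> \<and>
      (\<forall>x\<in>topspace X. \<phi> x \<in> {0..1} \<and> (\<phi> x \<noteq> 0 \<longrightarrow> (\<forall>k\<in>topspace K. \<bar>g k y - g k x\<bar> \<le> e))) \<and>
      (\<forall>z\<in>Y. (z \<in> Q \<longrightarrow> \<phi> z = 1) \<and> (z \<notin> Q \<longrightarrow> \<phi> z = 0))"
    if y: "y \<in> Y" for y
  proof -
    obtain N where N: "openin X N" "y \<in> N" "\<forall>x\<in>N. \<forall>k\<in>topspace K. \<bar>g k x - g k y\<bar> < e"
      using step1 y YX by blast
    have nb: "neighbourhood_base_of (\<lambda>U. closedin (subtopology X Y) U \<and> openin (subtopology X Y) U) (subtopology X Y)"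
      using dY dimension_le_0_neighbourhood_base_of_clopen by blast
    have NY: "openin (subtopology X Y) (N \<inter> Y)" using N(1) by (rule openin_subtopology_Int)
    have yNY: "y \<in> N \<inter> Y" using y N(2) by blast
    obtain U P where "openin (subtopology X Y) U" "closedin (subtopology X Y) P \<and> openin (subtopology X Y) P"
        "y \<in> U" "U \<subseteq> P" "P \<subseteq> N \<inter> Y"
      using nb[unfolded neighbourhood_base_of, rule_format, OF conjI[OF NY yNY]] by blast
    then have UP: "closedin (subtopology X Y) P" "openin (subtopology X Y) P" "y \<in> P" "P \<subseteq> N \<inter> Y"
      by (blast, blast, blast, blast)
    obtain Q where Q: "openin X Q" "P = Q \<inter> Y" using UP(2) unfolding openin_subtopology by blast
    have Pc: "closedin X P" using UP(1) cY closedin_trans_full by blast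
    define A where "A = (Y \<inter> (topspace X - Q)) \<union> (topspace X - N)"
    have Ac: "closedin X A" unfolding A_def using cY Q(1) N(1)
      by (intro closedin_Un closedin_Int closedin_diff) auto
    have dis: "disjnt A P" using UP(4) Q(2) by (auto simp: A_def disjnt_def)
    have le01: "0 \<le> (1::real)" by simp
    obtain \<phi> :: "'a \<Rightarrow> real" where \<phi>: "continuous_map X (top_of_set {0..1}) \<phi>" "\<phi> ` A \<subseteq> {0}" "\<phi> ` P \<subseteq> {1}"
      by (rule Urysohn_lemma[OF normX Ac Pc dis le01])
    show ?thesis
    proof (intro exI[of _ Q] exI[of _ \<phi>] conjI ballI impI)
      show "openin X Q" by (rule Q(1))
      show "y \<in> Q" using UP(3) Q(2) by auto
      show "continuous_map X euclideanreal \<phi>" using \<phi>(1) by (simp add: continuous_map_in_subtopology)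
      fix x assume x: "x \<in> topspace X"
      then show "\<phi> x \<in> {0..1}" using \<phi>(1) by (auto simp: continuous_map_def)
      fix k assume "\<phi> x \<noteq> 0" "k \<in> topspace K"
      then have "x \<in> N" using \<phi>(2) x by (auto simp: A_def)
      then show "\<bar>g k y - g k x\<bar> \<le> e" using N(3) \<open>k \<in> topspace K\<close> by (fastforce simp: abs_minus_commute)
    next
      fix z assume "z \<in> Y"
      show "z \<in> Q \<Longrightarrow> \<phi> z = 1" using \<phi>(3) Q(2) \<open>z \<in> Y\<close> by auto
      show "z \<notin> Q \<Longrightarrow> \<phi> z = 0" using \<phi>(2) \<open>z \<in> Y\<close> YX by (auto simp: A_def)
    qed
  qed
  obtain Q \<Phi> where Q\<Phi>: "\<And>y. y \<in> Y \<Longrightarrow> openin X (Q y) \<and> y \<in> Q y \<and> continuous_map X euclideanreal (\<Phi> y) \<and>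
      (\<forall>x\<in>topspace X. \<Phi> y x \<in> {0..1} \<and> (\<Phi> y x \<noteq> 0 \<longrightarrow> (\<forall>k\<in>topspace K. \<bar>g k y - g k x\<bar> \<le> e))) \<and>
      (\<forall>z\<in>Y. (z \<in> Q y \<longrightarrow> \<Phi> y z = 1) \<and> (z \<notin> Q y \<longrightarrow> \<Phi> y z = 0))"
    using step2 by metis
  have "compactin X Y" using cX cY closedin_compact_space by blast
  moreover have "Y \<subseteq> \<Union> (Q ` Y)" using Q\<Phi> by blast
  moreover have "\<forall>B\<in>Q ` Y. openin X B" using Q\<Phi> by blast
  ultimately have "\<exists>F. finite F \<and> F \<subseteq> Q ` Y \<and> Y \<subseteq> \<Union>F" unfolding compactin_def by blast
  then obtain Fs where "finite Fs" "Fs \<subseteq> Q ` Y" "Y \<subseteq> \<Union> Fs" by blast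
  then obtain Ys where Ys: "finite Ys" "Ys \<subseteq> Y" "Y \<subseteq> \<Union> (Q ` Ys)"
    by (metis finite_subset_image)
  then obtain ys where ys: "set ys = Ys" using finite_list by blast
  define h where "h = (\<lambda>k\<in>topspace K. \<lambda>x\<in>topspace X. hfold g \<Phi> ys k x)"
  have ysY: "y \<in> Y" if "y \<in> set ys" for y using that ys Ys by blast
  have \<Phi>rng: "\<Phi> y x \<in> {0..1}" if "y \<in> Y" "x \<in> topspace X" for y x using Q\<Phi>[OF that(1)] that(2) by blast
  have \<Phi>cont: "continuous_map X euclideanreal (\<Phi> y)" if "y \<in> Y" for y using Q\<Phi>[OF that(1)] by blast
  have \<Phi>small: "\<bar>g k y - g k x\<bar> \<le> e" if "y \<in> Y" "x \<in> topspace X" "\<Phi> y x \<noteq> 0" "k \<in> topspace K" for y x k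
    using Q\<Phi>[OF that(1)] that(2,3,4) by blast
  have \<Phi>one: "\<Phi> y z = 1" if "y \<in> Y" "z \<in> Y" "z \<in> Q y" for y z using Q\<Phi>[OF that(1)] that(2,3) by blast
  have \<Phi>zero: "\<Phi> y z = 0" if "y \<in> Y" "z \<in> Y" "z \<notin> Q y" for y z using Q\<Phi>[OF that(1)] that(2,3) by blast
  have hk_eq: "h k = (\<lambda>x\<in>topspace X. hfold g \<Phi> ys k x)" if "k \<in> topspace K" for k
    using that by (simp add: h_def)
  have hk: "h k \<in> mspace CF" if k: "k \<in> topspace K" for k
  proof -
    have rng: "hfold g \<Phi> ys k x \<in> {0..1}" if x: "x \<in> topspace X" for x
    proof (rule hfold_range)
      show "g k x \<in> {0..1}" using G1[OF k x] .
      show "\<forall>y\<in>set ys. \<Phi> y x \<in> {0..1} \<and> g k y \<in> {0..1}"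
        using \<Phi>rng ysY x G1[OF k] YX by blast
    qed
    have "continuous_map X euclideanreal (hfold g \<Phi> ys k)"
      using \<Phi>cont ysY G2[OF k] by (intro hfold_cont) blast+
    then have c1: "continuous_map X euclideanreal (h k)"
      by (rule continuous_map_eq) (simp add: hk_eq[OF k])
    have r1: "\<forall>x\<in>topspace X. h k x \<in> {0..1}" using rng by (simp add: hk_eq[OF k])
    have "continuous_map X (top_of_set {0..1}) (h k)"
      unfolding continuous_map_in_subtopology using c1 r1 by blast
    moreover have "h k \<in> extensional (topspace X)" by (simp add: hk_eq[OF k])
    ultimately show ?thesis unfolding msp using r1 by blast
  qed
  have close: "mdist CF (h k) (g k) \<le> e" if k: "k \<in> topspace K" for k
  proof (rule mdle)
    show "0 \<le> e" using epos by simp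
    show "\<forall>x\<in>topspace X. \<bar>h k x - g k x\<bar> \<le> e"
    proof
      fix x assume x: "x \<in> topspace X"
      have "\<bar>hfold g \<Phi> ys k x - g k x\<bar> \<le> e"
      proof (rule hfold_close)
        show "0 \<le> e" using epos by simp
        show "\<forall>y\<in>set ys. \<Phi> y x \<in> {0..1} \<and> (\<Phi> y x \<noteq> 0 \<longrightarrow> \<bar>g k y - g k x\<bar> \<le> e)"
          using \<Phi>rng \<Phi>small ysY x k by blast
      qed
      then show "\<bar>h k x - g k x\<bar> \<le> e" using x by (simp add: hk_eq[OF k])
    qed
  qed
  have cont: "continuous_map K (mtopology_of CF) h"
    unfolding mtopology_of_def CM.continuous_map_to_metric
  proof (intro ballI allI impI)
    fix k0 and \<delta> :: real assume k0: "k0 \<in> topspace K" and "\<delta> > 0"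
    then obtain W where W: "openin K W" "k0 \<in> W" "\<forall>k\<in>W. k \<in> topspace K \<and> (\<forall>x\<in>topspace X. \<bar>g k x - g k0 x\<bar> < \<delta>/2)"
      using G3[OF k0 half_gt_zero[OF \<open>\<delta> > 0\<close>]] by blast
    show "\<exists>U. openin K U \<and> k0 \<in> U \<and> (\<forall>y\<in>U. h y \<in> CM.mball (h k0) \<delta>)"
    proof (intro exI[of _ W] conjI ballI W(1,2))
      fix k assume k: "k \<in> W"
      then have kK: "k \<in> topspace K" using W by blast
      have "mdist CF (h k0) (h k) \<le> \<delta>/2"
      proof (rule mdle)
        show "0 \<le> \<delta>/2" using \<open>\<delta> > 0\<close> by simp
        show "\<forall>x\<in>topspace X. \<bar>h k0 x - h k x\<bar> \<le> \<delta> / 2"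
        proof
          fix x assume x: "x \<in> topspace X"
          have "\<bar>hfold g \<Phi> ys k0 x - hfold g \<Phi> ys k x\<bar> \<le> \<delta>/2"
          proof (rule hfold_lip)
            show "0 \<le> \<delta>/2" using \<open>\<delta> > 0\<close> by simp
            show "\<forall>y\<in>set ys. \<Phi> y x \<in> {0..1} \<and> \<bar>g k0 y - g k y\<bar> \<le> \<delta> / 2"
            proof
              fix y assume "y \<in> set ys"
              then have yY: "y \<in> Y" by (rule ysY)
              then have yX: "y \<in> topspace X" using YX by blast
              have "\<bar>g k y - g k0 y\<bar> < \<delta>/2" using W(3) k yX by blast
              then have "\<bar>g k0 y - g k y\<bar> \<le> \<delta>/2" using abs_minus_commute[of "g k y" "g k0 y"] by linarith
              then show "\<Phi> y x \<in> {0..1} \<and> \<bar>g k0 y - g k y\<bar> \<le> \<delta> / 2" using \<Phi>rng[OF yY x] by blast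
            qed
            have "\<bar>g k x - g k0 x\<bar> < \<delta>/2" using W(3) k x by blast
            then show "\<bar>g k0 x - g k x\<bar> \<le> \<delta> / 2" using abs_minus_commute[of "g k x" "g k0 x"] by linarith
          qed
          then show "\<bar>h k0 x - h k x\<bar> \<le> \<delta> / 2" using x by (simp add: hk_eq[OF k0] hk_eq[OF kK])
        qed
      qed
      then show "h k \<in> CM.mball (h k0) \<delta>" using hk k0 kK \<open>\<delta> > 0\<close> by auto
    qed
  qed
  have notF: "h k \<notin> F" if k: "k \<in> topspace K" for k
  proof -
    have "h k ` Y \<subseteq> (\<lambda>y. g k y) ` Ys"
    proof
      fix w assume "w \<in> h k ` Y"
      then obtain z where z: "z \<in> Y" "w = h k z" by auto
      have "\<forall>y\<in>set ys. \<Phi> y z = 0 \<or> \<Phi> y z = 1" using ysY \<Phi>one \<Phi>zero z(1) by blast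
      from hfold_fin[where ys=ys and \<Phi>=\<Phi> and z=z and G=g and k=k, OF this]
      have *: "(hfold g \<Phi> ys k z = g k z \<and> (\<forall>y\<in>set ys. \<Phi> y z = 0)) \<or> hfold g \<Phi> ys k z \<in> (\<lambda>y. g k y) ` set ys" .
      obtain y where "y \<in> Ys" "z \<in> Q y" using Ys z(1) by auto
      then have "\<Phi> y z = 1" using \<Phi>one Ys z(1) by blast
      then have "hfold g \<Phi> ys k z \<in> (\<lambda>y. g k y) ` Ys" using * ys \<open>y \<in> Ys\<close> by auto
      then show "w \<in> (\<lambda>y. g k y) ` Ys" using z k YX by (auto simp: h_def)
    qed
    then have "finite (h k ` Y)" using Ys(1) finite_subset by blast
    then show ?thesis using inf by blast
  qed
  have hmem: "h \<in> cmaps K (subtopology (mtopology_of CF) (mspace CF - F))"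
  proof -
    have "h \<in> topspace K \<rightarrow> mspace CF - F" using hk notF by blast
    then have "continuous_map K (subtopology (mtopology_of CF) (mspace CF - F)) h"
      unfolding continuous_map_in_subtopology using cont by blast
    moreover have "h \<in> extensional (topspace K)" unfolding h_def by (rule restrict_extensional)
    ultimately show ?thesis unfolding cmaps_def by blast
  qed
  show ?thesis
  proof (intro bexI[OF _ hmem] ballI)
    fix k assume "k \<in> topspace K"
    then show "mdist CF (h k) (g k) < \<epsilon>" using close[of k] \<open>\<epsilon> > 0\<close> by (simp add: e_def)
  qed
qed

lemma closure_eq:
  fixes X :: "'a topology" and Y :: "'a set" and F :: "('a \<Rightarrow> real) set" and K :: "'k topology"
  assumes "compact_space X" and "Hausdorff_space X"
    and "closedin X Y" and "subtopology X Y dim_le 0"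
    and "\<forall>f \<in> F. infinite (f ` Y)" and cK: "compact_space K"
  shows "compact_open_topology K (unit_cfun_topology X) closure_of
            cmaps K (subtopology (unit_cfun_topology X) (topspace (unit_cfun_topology X) - F)) =
          topspace (compact_open_topology K (unit_cfun_topology X))"
proof -
  define CF where "CF = cfunspace X (submetric euclidean_metric {0..1::real})"
  have T: "unit_cfun_topology X = mtopology_of CF" by (simp add: unit_cfun_topology_def CF_def)
  have "compact_open_topology K (mtopology_of CF) closure_of
            cmaps K (subtopology (mtopology_of CF) (mspace CF - F)) =
          topspace (compact_open_topology K (mtopology_of CF))"
  proof (rule dense_crit)
    fix g and \<epsilon> :: real assume g: "g \<in> cmaps K (mtopology_of CF)" and eps: "\<epsilon> > 0"
    have g': "g \<in> cmaps K (mtopology_of (cfunspace X (submetric euclidean_metric {0..1})))"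
      using g by (simp only: CF_def)
    from main_approx[OF assms(1-5) cK g' eps]
    show "\<exists>h\<in>cmaps K (subtopology (mtopology_of CF) (mspace CF - F)). \<forall>k\<in>topspace K. mdist CF (h k) (g k) < \<epsilon>"
      by (simp only: CF_def)
  next
    show "cmaps K (subtopology (mtopology_of CF) (mspace CF - F)) \<subseteq> cmaps K (mtopology_of CF)"
    proof
      fix h assume "h \<in> cmaps K (subtopology (mtopology_of CF) (mspace CF - F))"
      then have hh: "continuous_map K (subtopology (mtopology_of CF) (mspace CF - F)) h \<and> h \<in> extensional (topspace K)"
        unfolding cmaps_def by (rule CollectD)
      show "h \<in> cmaps K (mtopology_of CF)"
        unfolding cmaps_def
        by (intro CollectI conjI continuous_map_into_fulltopology[OF conjunct1[OF hh]] conjunct2[OF hh])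
    qed
  qed
  then show ?thesis by (simp only: T topspace_mtopology_of)
qed

theorem lemma4:
  fixes X :: "'a topology" and Y :: "'a set" and F :: "('a \<Rightarrow> real) set"
  assumes "compact_space X" and "Hausdorff_space X"
    and "closedin X Y" and "subtopology X Y dim_le 0"
    and "closedin (unit_cfun_topology X) F"
    and "\<forall>f \<in> F. infinite (f ` Y)"
  shows "Z_set TYPE('k) (unit_cfun_topology X) F"
  unfolding Z_set_def
proof (intro conjI allI impI)
  show "closedin (unit_cfun_topology X) F" by (rule assms(5))
  fix K :: "'k topology" assume K: "compact_space K \<and> Hausdorff_space K"
  show "compact_open_topology K (unit_cfun_topology X) closure_of
            cmaps K (subtopology (unit_cfun_topology X) (topspace (unit_cfun_topology X) - F)) =
          topspace (compact_open_topology K (unit_cfun_topology X))"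
    by (rule closure_eq[OF assms(1-4) assms(6) conjunct1[OF K]])
qed

end
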